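(* A matrix $A\in\mathcal{B}$ lies in $\ker\overline{\phi}$ if and only if $A=\beta(\Delta)^k$ for some $k\in\mathbb{Z}$, where $\Delta=(\sigma_1\sigma_2\sigma_1)^2$.
   Context: Let $B_3$ be the braid group with standard generators $\sigma_1,\sigma_2$ and $\beta$ the Burau representation $\beta(\sigma_1)=\begin{pmatrix}1-t&t&0\\1&0&0\\0&0&1\end{pmatrix}$, $\beta(\sigma_2)=\begin{pmatrix}1&0&0\\0&1-t&t\\0&1&0\end{pmatrix}$. For a matrix $A$ with Laurent polynomial entries, $\overline{A}$ denotes substitution $t\mapsto t^{-1}$ in every entry. Let $J_3=\begin{pmatrix}1&-t^{-1}&-t^{-1}\\-t&1&-t^{-1}\\-t&-t&1\end{pmatrix}$, $v=(t,t^2,t^3)$ (a row vector), $\vec{1}=(1,1,1)^T$, and $\mathcal{B}=\{A\in\mathrm{GL}(3,\mathbb{Z}[t,t^{-1}]) : vA=v,\ A\vec 1=\vec 1,\ \overline{A}J_3A^T=J_3\}$. For $A=(A_{ij})\in\mathcal{B}$ put, for $k=1,2$, $f_{k1}=A_{k1}(1+t+t^2)-1$, $f_{k2}=A_{k1}+A_{k2}(1+t)-1$, $g_{kl}=f_{kl}/(t(1+t))$, and $\phi(A)=\begin{pmatrix}g_{11}&g_{12}\\ t^{-1}g_{11}+(1+t)g_{21}& t^{-1}g_{12}+(1+t)g_{22}\end{pmatrix}$. Let $\overline{\phi}=\pi\circ\phi$ with $\pi:\mathrm{GL}(2,\mathbb{Q}(t))\to\mathrm{PGL}(2,\mathbb{Q}(t))$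 the projection. *)

theory Defs
  imports "HOL-Analysis.Analysis" "HOL-Computational_Algebra.Polynomial_Factorial"
begin

text \<open>The field Q(t) is modelled as the fraction field of rat poly.
  Laurent polynomials Z[t,t^-1] are the subring of elements p(t)/t^n with p an integer polynomial.\<close>

type_synonym qt = "rat poly fract"

definition tt :: qt where "tt = to_fract [:0, 1:]"

definition laurent :: "qt \<Rightarrow> bool" where
  "laurent x \<longleftrightarrow> (\<exists>(p::int poly) (n::nat). x = to_fract (map_poly of_int p) / tt ^ n)"

definition subst_inv_poly :: "rat poly \<Rightarrow> qt" where
  "subst_inv_poly p = poly (map_poly (\<lambda>c. to_fract [:c:]) p) (inverse tt)"

definition tbar :: "qt \<Rightarrow> qt" where
  "tbar x = (SOME y. \<exists>p q. q \<noteq> 0 \<and> x = to_fract p / to_fract q \<and>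
                        y = subst_inv_poly p / subst_inv_poly q)"

definition mbar :: "qt^'n^'m \<Rightarrow> qt^'n^'m" where
  "mbar A = (\<chi> i j. tbar (A $ i $ j))"

definition laurent_mat :: "qt^'n^'m \<Rightarrow> bool" where
  "laurent_mat A \<longleftrightarrow> (\<forall>i j. laurent (A $ i $ j))"

definition GL3L :: "(qt^3^3) set" where
  "GL3L = {A. laurent_mat A \<and> (\<exists>B::qt^3^3. laurent_mat B \<and> A ** B = mat 1 \<and> B ** A = mat 1)}"

definition J3 :: "qt^3^3" where
  "J3 = vector [vector [1, - inverse tt, - inverse tt],
                vector [- tt, 1, - inverse tt],
                vector [- tt, - tt, 1]]"

definition vv :: "qt^3" where "vv = vector [tt, tt^2, tt^3]"

definition ones3 :: "qt^3" where "ones3 = (\<chi> i. 1)"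

definition calB :: "(qt^3^3) set" where
  "calB = {A \<in> GL3L. vv v* A = vv \<and> A *v ones3 = ones3 \<and> mbar A ** J3 ** transpose A = J3}"

definition burau1 :: "qt^3^3" where
  "burau1 = vector [vector [1 - tt, tt, 0], vector [1, 0, 0], vector [0, 0, 1]]"

definition burau2 :: "qt^3^3" where
  "burau2 = vector [vector [1, 0, 0], vector [0, 1 - tt, tt], vector [0, 1, 0]]"

definition burauDelta :: "qt^3^3" where
  "burauDelta = (burau1 ** burau2 ** burau1) ** (burau1 ** burau2 ** burau1)"

definition mat_npow :: "'a::semiring_1^'n^'n \<Rightarrow> nat \<Rightarrow> 'a^'n^'n" where
  "mat_npow M n = (((**) M) ^^ n) (mat 1)"

definition mat_zpow :: "'a::semiring_1^'n^'n \<Rightarrow> int \<Rightarrow> 'a^'n^'n" where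
  "mat_zpow M k = (if 0 \<le> k then mat_npow M (nat k) else mat_npow (matrix_inv M) (nat (- k)))"

definition phi :: "qt^3^3 \<Rightarrow> qt^2^2" where
  "phi A = (let
     f11 = A$1$1 * (1 + tt + tt^2) - 1;
     f12 = A$1$1 + A$1$2 * (1 + tt) - 1;
     f21 = A$2$1 * (1 + tt + tt^2) - 1;
     f22 = A$2$1 + A$2$2 * (1 + tt) - 1;
     g11 = f11 / (tt * (1 + tt)); g12 = f12 / (tt * (1 + tt));
     g21 = f21 / (tt * (1 + tt)); g22 = f22 / (tt * (1 + tt))
   in vector [vector [g11, g12],
              vector [inverse tt * g11 + (1 + tt) * g21, inverse tt * g12 + (1 + tt) * g22]])"

text \<open>Kernel of phi-bar = pi o phi: phi A is a nonzero scalar matrix (the identity of PGL(2,Q(t))).\<close>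
definition in_ker_phibar :: "qt^3^3 \<Rightarrow> bool" where
  "in_ker_phibar A \<longleftrightarrow> (\<exists>c::qt. c \<noteq> 0 \<and> phi A = mat c)"

end

theory Submission
  imports Defs
begin

lemma tt_nz: "tt \<noteq> 0"
  unfolding tt_def by simp

lemma s_eq: "1 + tt + tt^2 = to_fract [:1,1,1:]"
proof -
  have "1 + tt + tt^2 = to_fract (1 + [:0,1:] + [:0,1:]^2)"
    by (simp only: tt_def to_fract_add to_fract_1 power2_eq_square to_fract_mult)
  also have "1 + [:0,1:] + [:0,1:]^2 = [:1,1,1::rat:]"
    by (simp add: power2_eq_square one_pCons)
  finally show ?thesis .
qed

lemma s_nz: "1 + tt + tt^2 \<noteq> 0"
  unfolding s_eq by simp

lemma p1_eq: "1 + tt = to_fract [:1,1:]"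
proof -
  have "1 + tt = to_fract (1 + [:0,1:])"
    by (simp only: tt_def to_fract_add to_fract_1)
  also have "1 + [:0,1:] = [:1,1::rat:]"
    by (simp add: one_pCons)
  finally show ?thesis .
qed

lemma p1_nz: "1 + tt \<noteq> 0"
  unfolding p1_eq by simp

definition MG :: "'a::field \<Rightarrow> 'a \<Rightarrow> 'a \<Rightarrow> 'a^3^3" where
  "MG S a c = (\<chi> i j. (if i = j then c else 0) + (1 - c) * (vector [1, a, S - 1 - a] :: 'a^3) $ j / S)"

lemma MG_nth: "MG S a c $ i $ j = (if i = j then c else 0) + (1 - c) * (vector [1, a, S - 1 - a] :: 'a::field^3) $ j / S"
  unfolding MG_def by simp

lemma MG_mult:
  assumes S: "S \<noteq> 0"
  shows "MG S a c ** MG S a d = MG S a (c * d)"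
proof -
  have "\<forall>i j. (\<Sum>k\<in>UNIV. MG S a c $ i $ k * MG S a d $ k $ j) = MG S a (c*d) $ i $ j"
    unfolding forall_3 sum_3 MG_nth
    by (simp add: field_simps S, algebra?)
  then show ?thesis unfolding matrix_matrix_mult_def vec_eq_iff by simp
qed

lemma MG_one: "MG S a 1 = mat 1"
  unfolding MG_def mat_def by (simp add: vec_eq_iff)

lemma MG_npow:
  assumes S: "S \<noteq> 0"
  shows "mat_npow (MG S a c) n = MG S a (c ^ n)"
proof (induction n)
  case 0
  then show ?case by (simp add: mat_npow_def MG_one)
next
  case (Suc n)
  have "mat_npow (MG S a c) (Suc n) = MG S a c ** mat_npow (MG S a c) n"
    by (simp add: mat_npow_def)
  then show ?case using Suc by (simp add: MG_mult S)
qed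

lemma MG_inv:
  assumes S: "S \<noteq> 0" and c: "c \<noteq> 0"
  shows "matrix_inv (MG S a c) = MG S a (inverse c)"
proof -
  let ?M = "MG S a c" and ?N = "MG S a (inverse c)"
  have ex: "?M ** ?N = mat 1 \<and> ?N ** ?M = mat 1"
    using c by (simp add: MG_mult S MG_one)
  define X where "X = matrix_inv ?M"
  have X: "?M ** X = mat 1 \<and> X ** ?M = mat 1"
    unfolding X_def matrix_inv_def by (rule someI[of _ ?N], rule ex)
  have "X = X ** (?M ** ?N)" using ex by (simp add: matrix_mul_rid)
  also have "\<dots> = (X ** ?M) ** ?N" by (simp add: matrix_mul_assoc)
  also have "\<dots> = ?N" using X by (simp add: matrix_mul_lid)
  finally show ?thesis unfolding X_def .
qed

abbreviation S0 :: qt where "S0 \<equiv> 1 + tt + tt^2"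

definition Mc :: "qt \<Rightarrow> qt^3^3" where "Mc c = MG S0 tt c"

lemma Mc_nth: "Mc c $ i $ j = (if i = j then c else 0) + (1 - c) * (vector [1, tt, tt^2] :: qt^3) $ j / S0"
  unfolding Mc_def MG_nth by simp

lemma burau_h: "burau1 ** burau2 ** burau1 =
   vector [vector [1 - tt, tt - tt^2, tt^2], vector [1 - tt, tt, 0], vector [1, 0, 0]]"
  unfolding burau1_def burau2_def matrix_matrix_mult_def vec_eq_iff forall_3 sum_3
  by (simp add: algebra_simps power2_eq_square)

lemma S0_split: "S0 = 1 + tt * (1 + tt)"
  by (simp add: algebra_simps power2_eq_square)

lemma Mc_e: "(1 - c) * x / S0 = (1 - c) / S0 * x" by simp

lemma burau_hh: "burauDelta = vector [vector [tt^3 + 1 - tt, (1 - tt) * tt, (1 - tt) * tt^2],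
  vector [1 - tt, tt^3 + (1 - tt) * tt, (1 - tt) * tt^2], vector [1 - tt, (1 - tt) * tt, tt^3 + (1 - tt) * tt^2]]"
proof -
  have "burauDelta = (vector [vector [1 - tt, tt - tt^2, tt^2], vector [1 - tt, tt, 0], vector [1, 0, 0]] :: qt^3^3)
     ** vector [vector [1 - tt, tt - tt^2, tt^2], vector [1 - tt, tt, 0], vector [1, 0, 0]]"
    unfolding burauDelta_def burau_h ..
  also have "\<dots> = vector [vector [tt^3 + 1 - tt, (1 - tt) * tt, (1 - tt) * tt^2],
  vector [1 - tt, tt^3 + (1 - tt) * tt, (1 - tt) * tt^2], vector [1 - tt, (1 - tt) * tt, tt^3 + (1 - tt) * tt^2]]"
    unfolding matrix_matrix_mult_def vec_eq_iff forall_3 sum_3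
    by (simp add: algebra_simps power2_eq_square power3_eq_cube)
  finally show ?thesis .
qed

lemma burauDelta_Mc: "burauDelta = Mc (tt^3)"
proof -
  have d: "(1 - tt^3) / S0 = 1 - tt"
    using s_nz by (simp add: field_simps power2_eq_square power3_eq_cube)
  have "\<forall>i j. burauDelta $ i $ j = Mc (tt^3) $ i $ j"
    unfolding burau_hh Mc_nth forall_3 Mc_e d
    by (simp add: algebra_simps power2_eq_square power3_eq_cube)
  then show ?thesis by (simp add: vec_eq_iff)
qed

lemma phi_Mc: "phi (Mc c) = mat c"
proof -
  have S: "S0 \<noteq> 0" by (rule s_nz)
  have T: "tt * (1 + tt) \<noteq> 0" using tt_nz p1_nz by simp
  define X where "X = (1 - c) / S0"
  have X: "X * (1 + tt + tt^2) = 1 - c" unfolding X_def using S by simp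
  have M: "Mc c $ i $ j = (if i = j then c else 0) + X * (vector [1, tt, tt^2] :: qt^3) $ j" for i j
    unfolding Mc_nth X_def by simp
  have e11: "Mc c $ 1 $ 1 * S0 - 1 = c * (tt * (1 + tt))"
    unfolding M using X by (simp; algebra)
  have e12: "Mc c $ 1 $ 1 + Mc c $ 1 $ 2 * (1 + tt) - 1 = 0"
    unfolding M using X by (simp; algebra)
  have e21: "Mc c $ 2 $ 1 * S0 - 1 = - c"
    unfolding M using X by (simp; algebra)
  have e22: "Mc c $ 2 $ 1 + Mc c $ 2 $ 2 * (1 + tt) - 1 = c * tt"
    unfolding M using X by (simp; algebra)
  have "\<forall>i j. phi (Mc c) $ i $ j = mat c $ i $ j"
    unfolding phi_def Let_def forall_2 mat_def e11 e12 e21 e22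
    using T tt_nz p1_nz
    apply (simp only: vector_2 if_True if_False)
    apply (intro conjI)
    apply (simp_all add: divide_simps)
    done
  then show ?thesis by (simp add: vec_eq_iff)
qed

lemma zpow_Mc: "mat_zpow burauDelta k =
   Mc (if 0 \<le> k then tt ^ (3 * nat k) else inverse tt ^ (3 * nat (- k)))"
proof -
  have t3: "tt ^ 3 \<noteq> 0" using tt_nz by simp
  show ?thesis
  proof (cases "0 \<le> k")
    case True
    then show ?thesis unfolding mat_zpow_def burauDelta_Mc Mc_def
      by (simp add: MG_npow s_nz power_mult)
  next
    case False
    then show ?thesis unfolding mat_zpow_def burauDelta_Mc Mc_def
      by (simp add: MG_npow MG_inv[OF s_nz t3] s_nz power_mult power_inverse)
  qed
qed

lemma Mc_vv: "vv v* Mc c = vv"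
proof -
  have S: "S0 \<noteq> 0" by (rule s_nz)
  define X where "X = (1 - c) / S0"
  have X: "X * (1 + tt + tt^2) = 1 - c" unfolding X_def using S by simp
  have M: "Mc c $ i $ j = (if i = j then c else 0) + X * (vector [1, tt, tt^2] :: qt^3) $ j" for i j
    unfolding Mc_nth X_def by simp
  have "\<forall>j. (vv v* Mc c) $ j = vv $ j"
    unfolding vector_matrix_mult_def forall_3 sum_3 M vv_def using X
    by (simp; algebra)
  then show ?thesis by (simp add: vec_eq_iff)
qed

lemma Mc_ones: "Mc c *v ones3 = ones3"
proof -
  have S: "S0 \<noteq> 0" by (rule s_nz)
  define X where "X = (1 - c) / S0"
  have X: "X * (1 + tt + tt^2) = 1 - c" unfolding X_def using S by simp
  have M: "Mc c $ i $ j = (if i = j then c else 0) + X * (vector [1, tt, tt^2] :: qt^3) $ j" for i j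
    unfolding Mc_nth X_def by simp
  have "\<forall>j. (Mc c *v ones3) $ j = ones3 $ j"
    unfolding matrix_vector_mult_def forall_3 sum_3 M ones3_def using X
    by (simp; algebra)
  then show ?thesis by (simp add: vec_eq_iff)
qed

lemma determined:
  assumes v: "vv v* A = vv" and o: "A *v ones3 = ones3" and p: "phi A = mat c"
  shows "A = Mc c"
proof -
  have S: "S0 \<noteq> 0" by (rule s_nz)
  have T: "tt * (1 + tt) \<noteq> 0" using tt_nz p1_nz by simp
  let ?M = "Mc c"
  have pp: "phi A = phi ?M" using p phi_Mc by simp
  have q: "phi A $ i $ j = phi ?M $ i $ j" for i j using pp by simp
  note q11 = q[of 1 1, unfolded phi_def Let_def vector_2]
  note q12 = q[of 1 2, unfolded phi_def Let_def vector_2]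
  note q21 = q[of 2 1, unfolded phi_def Let_def vector_2]
  note q22 = q[of 2 2, unfolded phi_def Let_def vector_2]
  have d11: "A $ 1 $ 1 = ?M $ 1 $ 1" using q11 T S by simp
  have d12: "A $ 1 $ 2 = ?M $ 1 $ 2" using q12 T S p1_nz d11 by simp
  have d21: "A $ 2 $ 1 = ?M $ 2 $ 1" using q21 T S p1_nz tt_nz d11 by simp
  have d22: "A $ 2 $ 2 = ?M $ 2 $ 2" using q22 T S p1_nz tt_nz d11 d12 d21 by simp
  have r: "(A *v ones3) $ i = (?M *v ones3) $ i" for i using o Mc_ones by simp
  note r1 = r[of 1, unfolded matrix_vector_mult_def sum_3 ones3_def, simplified]
  note r2 = r[of 2, unfolded matrix_vector_mult_def sum_3 ones3_def, simplified]
  have d13: "A $ 1 $ 3 = ?M $ 1 $ 3" using r1 d11 d12 by simp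
  have d23: "A $ 2 $ 3 = ?M $ 2 $ 3" using r2 d21 d22 by simp
  have w: "(vv v* A) $ j = (vv v* ?M) $ j" for j using v Mc_vv by simp
  note w1 = w[of 1, unfolded vector_matrix_mult_def sum_3 vv_def, simplified]
  note w2 = w[of 2, unfolded vector_matrix_mult_def sum_3 vv_def, simplified]
  note w3 = w[of 3, unfolded vector_matrix_mult_def sum_3 vv_def, simplified]
  have d31: "A $ 3 $ 1 = ?M $ 3 $ 1" using w1 d11 d21 tt_nz by simp
  have d32: "A $ 3 $ 2 = ?M $ 3 $ 2" using w2 d12 d22 tt_nz by simp
  have d33: "A $ 3 $ 3 = ?M $ 3 $ 3" using w3 d13 d23 tt_nz by simp
  have "\<forall>i j. A $ i $ j = ?M $ i $ j"
    unfolding forall_3 using d11 d12 d13 d21 d22 d23 d31 d32 d33 by simp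
  then show ?thesis by (simp add: vec_eq_iff)
qed

lemma int_poly_unit_monom:
  fixes p q :: "int poly"
  assumes pq: "p * q = monom 1 N"
  shows "\<exists>u a. (u = 1 \<or> u = -1) \<and> p = monom u a"
proof -
  have pq0: "p * q \<noteq> 0" using pq by simp
  then have p0: "p \<noteq> 0" and q0: "q \<noteq> 0" by auto
  define a where "a = order 0 p"
  define b where "b = order 0 q"
  have "monom 1 a dvd p" by (simp add: monom_1_dvd_iff p0 a_def)
  then obtain p' where p': "p = monom 1 a * p'" by (erule dvdE)
  have "monom 1 b dvd q" by (simp add: monom_1_dvd_iff q0 b_def)
  then obtain q' where q': "q = monom 1 b * q'" by (erule dvdE)
  have "p' \<noteq> 0" using p0 p' by auto
  have "q' \<noteq> 0" using q0 q' by auto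
  have "order 0 p = a + order 0 p'" using \<open>p' \<noteq> 0\<close> by (simp add: p' order_mult)
  then have "order 0 p' = 0" by (simp add: a_def)
  with \<open>p' \<noteq> 0\<close> have p'0: "coeff p' 0 \<noteq> 0" by (simp add: order_root poly_0_coeff_0[symmetric])
  have "order 0 q = b + order 0 q'" using \<open>q' \<noteq> 0\<close> by (simp add: q' order_mult)
  then have "order 0 q' = 0" by (simp add: b_def)
  with \<open>q' \<noteq> 0\<close> have q'0: "coeff q' 0 \<noteq> 0" by (simp add: order_root poly_0_coeff_0[symmetric])
  have e: "monom 1 (a + b) * (p' * q') = monom 1 N"
    using pq unfolding p' q' by (simp add: mult_monom ac_simps)
  have "coeff (monom 1 (a + b) * (p' * q')) (a + b) = coeff p' 0 * coeff q' 0"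
    by (simp add: coeff_monom_mult coeff_mult_0)
  then have "coeff (monom (1::int) N) (a + b) \<noteq> 0" using e p'0 q'0 by simp
  then have N: "N = a + b" by (simp add: coeff_monom split: if_splits)
  have "monom 1 N * (p' * q') = monom 1 N * 1" using e N by simp
  then have "p' * q' = 1" by (subst (asm) mult_left_cancel) simp_all
  then have "p' dvd 1" by (metis dvdI)
  then obtain u where u: "p' = [:u:]" "u dvd 1" by (auto simp: is_unit_poly_iff)
  then have "u = 1 \<or> u = -1" by auto
  moreover have "p = monom u a" using u p' by (simp add: monom_altdef)
  ultimately show ?thesis by blast
qed

lemma mpi_add: "map_poly (of_int::int\<Rightarrow>'a::comm_ring_1) (p + q) = map_poly of_int p + map_poly of_int q"
  by (rule poly_eqI) (simp add: coeff_map_poly)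

lemma mpi_diff: "map_poly (of_int::int\<Rightarrow>'a::comm_ring_1) (p - q) = map_poly of_int p - map_poly of_int q"
  by (rule poly_eqI) (simp add: coeff_map_poly)

lemma mpi_mult: "map_poly (of_int::int\<Rightarrow>'a::comm_ring_1) (p * q) = map_poly of_int p * map_poly of_int q"
  by (rule poly_eqI) (simp add: coeff_map_poly coeff_mult of_int_sum)

lemma mpi_monom: "map_poly (of_int::int\<Rightarrow>'a::comm_ring_1) (monom u a) = monom (of_int u) a"
  by (simp add: map_poly_monom)

lemma mpi_inj: "map_poly (of_int::int\<Rightarrow>rat) p = map_poly of_int q \<Longrightarrow> p = q"
  by (rule poly_eqI) (metis coeff_map_poly of_int_0 of_int_eq_iff)

definition ip :: "int poly \<Rightarrow> qt" where "ip p = to_fract (map_poly of_int p)"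

lemma ip_mult: "ip (p * q) = ip p * ip q" unfolding ip_def by (simp add: mpi_mult)
lemma ip_diff: "ip (p - q) = ip p - ip q" unfolding ip_def by (simp add: mpi_diff)
lemma ip_inj: "ip p = ip q \<Longrightarrow> p = q" unfolding ip_def by (auto intro: mpi_inj)

lemma to_fract_power: "to_fract (x ^ n) = to_fract x ^ n"
  by (induction n) simp_all

lemma ip_monom1: "ip (monom 1 n) = tt ^ n"
  unfolding ip_def tt_def mpi_monom by (simp add: monom_altdef to_fract_power)

lemma ip_monom: "u = 1 \<or> u = -1 \<Longrightarrow> ip (monom u n) = of_int u * tt ^ n"
proof -
  assume "u = 1 \<or> u = -1"
  moreover have "monom (-1::int) n = - monom 1 n" by (simp add: monom_altdef)
  moreover have "ip (- p) = - ip p" for p unfolding ip_def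
    by (metis ip_def ip_diff diff_0 map_poly_0 to_fract_0)
  ultimately show ?thesis using ip_monom1 by auto
qed

lemma ip_S0: "ip [:1,1,1:] = S0"
  unfolding ip_def s_eq by (simp add: map_poly_pCons)

lemma laurent_ip: "laurent x \<longleftrightarrow> (\<exists>p n. x = ip p / tt ^ n)"
  unfolding laurent_def ip_def by simp

lemma laurent_diff:
  assumes "laurent x" "laurent y" shows "laurent (x - y)"
proof -
  obtain p n where x: "x = ip p / tt ^ n" using assms(1) laurent_ip by blast
  obtain q m where y: "y = ip q / tt ^ m" using assms(2) laurent_ip by blast
  have "x - y = ip (p * monom 1 m - q * monom 1 n) / tt ^ (n + m)"
    unfolding x y ip_diff ip_mult ip_monom1 using tt_nz by (simp add: field_simps power_add)
  then show ?thesis unfolding laurent_ip by blast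
qed

lemma laurent_unit:
  assumes "laurent c" "laurent (inverse c)" "c \<noteq> 0"
  shows "\<exists>u a n. (u = 1 \<or> u = -1) \<and> c = of_int u * tt ^ a / tt ^ n"
proof -
  obtain p n where x: "c = ip p / tt ^ n" using assms(1) laurent_ip by blast
  obtain q m where y: "inverse c = ip q / tt ^ m" using assms(2) laurent_ip by blast
  have "c * inverse c = 1" using assms(3) by simp
  then have h: "(ip p / tt ^ n) * (ip q / tt ^ m) = 1" using x y by metis
  have tn: "tt ^ n \<noteq> 0" "tt ^ m \<noteq> 0" using tt_nz by simp_all
  have "ip p * ip q = (ip p / tt ^ n * (ip q / tt ^ m)) * (tt ^ n * tt ^ m)"
    using tn by (simp add: divide_simps)
  then have "ip p * ip q = tt ^ n * tt ^ m" unfolding h by simp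
  then have "ip (p * q) = ip (monom 1 (n + m))" by (simp add: ip_mult ip_monom1 power_add)
  then have "p * q = monom 1 (n + m)" by (rule ip_inj)
  then obtain u a where u: "u = 1 \<or> u = -1" and pu: "p = monom u a" using int_poly_unit_monom by blast
  have "c = of_int u * tt ^ a / tt ^ n" unfolding x pu ip_monom[OF u] ..
  then show ?thesis using u by blast
qed

definition om :: complex where "om = Complex (-1/2) (sqrt 3 / 2)"

lemma om2: "om ^ 2 = Complex (-1/2) (- sqrt 3 / 2)"
  by (simp add: om_def complex_eq_iff power2_eq_square)

lemma om3: "om ^ 3 = 1"
proof -
  have "om ^ 3 = om ^ 2 * om" by (simp add: power_numeral_reduce power2_eq_square)
  then show ?thesis unfolding om2 by (simp add: om_def complex_eq_iff)
qed

lemma om_sum: "1 + om * (1 + om) = 0"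
proof -
  have "1 + om * (1 + om) = 1 + om + om ^ 2" by (simp add: algebra_simps power2_eq_square)
  then show ?thesis unfolding om2 by (simp add: om_def complex_eq_iff)
qed

lemma om_pow: "om ^ k = om ^ (k mod 3)"
proof -
  have "om ^ k = om ^ (3 * (k div 3) + k mod 3)" by (simp only: div_mult_mod_eq mult.commute[of 3])
  also have "\<dots> = (om ^ 3) ^ (k div 3) * om ^ (k mod 3)" by (simp only: power_add power_mult)
  also have "\<dots> = om ^ (k mod 3)" by (simp add: om3)
  finally show ?thesis .
qed

lemma Re_om: "Re om = -1/2" by (simp add: om_def)
lemma Im_om: "Im om = sqrt 3 / 2" by (simp add: om_def)

lemma om_nz: "om \<noteq> 0" by (simp add: om_def complex_eq_iff)

lemma omega_step:
  assumes u: "u = 1 \<or> u = -1" and L: "laurent ((1 - of_int u * tt ^ a / tt ^ n) / S0)"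
  shows "u = 1 \<and> a mod 3 = n mod 3"
proof -
  obtain r m where r: "(1 - of_int u * tt ^ a / tt ^ n) / S0 = ip r / tt ^ m"
    using L laurent_ip by blast
  have tn: "tt ^ n \<noteq> 0" "tt ^ m \<noteq> 0" using tt_nz by simp_all
  have "(tt ^ n - of_int u * tt ^ a) * tt ^ m = ip r * S0 * tt ^ n"
    using r tn s_nz by (simp add: field_simps)
  then have "ip ((monom 1 n - monom u a) * monom 1 m) = ip (r * [:1,1,1:] * monom 1 n)"
    unfolding ip_mult ip_diff ip_monom1 ip_monom[OF u] ip_S0 .
  then have P: "(monom 1 n - monom u a) * monom 1 m = r * [:1,1,1:] * monom 1 n"
    by (rule ip_inj)
  have "poly (map_poly (of_int::int\<Rightarrow>complex) ((monom 1 n - monom u a) * monom 1 m)) om =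
        poly (map_poly (of_int::int\<Rightarrow>complex) (r * [:1,1,1:] * monom 1 n)) om"
    unfolding P ..
  then have "(om ^ n - of_int u * om ^ a) * om ^ m = 0"
    unfolding mpi_mult mpi_diff mpi_monom poly_mult poly_diff poly_monom
    by (simp add: map_poly_pCons om_sum)
  then have e: "om ^ n = of_int u * om ^ a" using om_nz by simp
  have "n mod 3 < 3" "a mod 3 < 3" by simp_all
  then have c3: "n mod 3 \<in> {0,1,2}" "a mod 3 \<in> {0,1,2}" by auto
  show ?thesis using e c3 u
    apply (subst (asm) (1 2) om_pow)
    apply (auto simp: om2 Re_om Im_om complex_eq_iff)
    done
qed

lemma Mc_inv_left: "c \<noteq> 0 \<Longrightarrow> Mc (inverse c) ** Mc c = mat 1"
  unfolding Mc_def by (simp add: MG_mult s_nz MG_one)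

lemma Mc_11_21: "Mc c $ 1 $ 1 - Mc c $ 2 $ 1 = c"
  unfolding Mc_nth by simp

lemma Mc_21: "Mc c $ 2 $ 1 = (1 - c) / S0"
  unfolding Mc_nth by simp

lemma tt_quot:
  assumes "a mod 3 = n mod 3"
  shows "\<exists>k. tt ^ a / tt ^ n = (if 0 \<le> k then tt ^ (3 * nat k) else inverse tt ^ (3 * nat (- k)))"
proof -
  have "int a mod 3 = int n mod 3" using assms by (metis of_nat_mod of_nat_numeral)
  then have "3 dvd (int a - int n)" by (simp add: mod_eq_dvd_iff)
  then obtain k where k: "int a - int n = 3 * k" by (elim dvdE)
  show ?thesis
  proof (cases "0 \<le> k")
    case True
    then have an: "n \<le> a" "a - n = 3 * nat k" using k by auto
    have "tt ^ a / tt ^ n = tt ^ (a - n)" by (rule power_diff[symmetric]) (use an tt_nz in auto)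
    then show ?thesis using True an by (intro exI[of _ k]) simp
  next
    case False
    then have an: "a \<le> n" "n - a = 3 * nat (- k)" using k by auto
    have "tt ^ a / tt ^ n = inverse (tt ^ n / tt ^ a)" by simp
    also have "tt ^ n / tt ^ a = tt ^ (n - a)" by (rule power_diff[symmetric]) (use an tt_nz in auto)
    finally have "tt ^ a / tt ^ n = inverse (tt ^ (n - a))" .
    then show ?thesis using False an by (intro exI[of _ k]) (simp add: power_inverse)
  qed
qed

theorem corollary3p12:
  fixes A :: "qt^3^3"
  assumes "A \<in> calB"
  shows "in_ker_phibar A \<longleftrightarrow> (\<exists>k::int. A = mat_zpow burauDelta k)"
proof
  assume "in_ker_phibar A"
  then obtain c where c0: "c \<noteq> 0" and pc: "phi A = mat c" unfolding in_ker_phibar_def by blast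
  have GL: "A \<in> GL3L" and v: "vv v* A = vv" and o: "A *v ones3 = ones3"
    using assms unfolding calB_def by auto
  have AM: "A = Mc c" using determined[OF v o pc] .
  obtain B where LA: "laurent_mat A" and LB: "laurent_mat B" and AB: "A ** B = mat 1"
    using GL unfolding GL3L_def by blast
  have "B = (Mc (inverse c) ** A) ** B" using Mc_inv_left[OF c0] AM by (simp add: matrix_mul_lid)
  also have "\<dots> = Mc (inverse c)" by (simp add: matrix_mul_assoc[symmetric] AB matrix_mul_rid)
  finally have BM: "B = Mc (inverse c)" .
  have Lc: "laurent c"
    using laurent_diff[of "A $ 1 $ 1" "A $ 2 $ 1"] LA unfolding laurent_mat_def AM Mc_11_21 by blast
  have Lci: "laurent (inverse c)"
    using laurent_diff[of "B $ 1 $ 1" "B $ 2 $ 1"] LB unfolding laurent_mat_def BM Mc_11_21 by blast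
  obtain u a n where u: "u = 1 \<or> u = -1" and cu: "c = of_int u * tt ^ a / tt ^ n"
    using laurent_unit[OF Lc Lci c0] by blast
  have "laurent (A $ 2 $ 1)" using LA unfolding laurent_mat_def by blast
  then have "laurent ((1 - c) / S0)" by (simp only: AM Mc_21)
  then have "u = 1 \<and> a mod 3 = n mod 3" using omega_step[OF u] cu by simp
  then have c1: "c = tt ^ a / tt ^ n" and amn: "a mod 3 = n mod 3" using cu by auto
  obtain k where "tt ^ a / tt ^ n = (if 0 \<le> k then tt ^ (3 * nat k) else inverse tt ^ (3 * nat (- k)))"
    using tt_quot[OF amn] by blast
  then have "A = mat_zpow burauDelta k" unfolding zpow_Mc AM c1 by simp
  then show "\<exists>k::int. A = mat_zpow burauDelta k" by blast
next
  assume "\<exists>k::int. A = mat_zpow burauDelta k"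
  then obtain k where k: "A = mat_zpow burauDelta k" by blast
  define c where "c = (if 0 \<le> k then tt ^ (3 * nat k) else inverse tt ^ (3 * nat (- k)))"
  have "c \<noteq> 0" unfolding c_def using tt_nz by simp
  moreover have "phi A = mat c" unfolding k zpow_Mc c_def[symmetric] by (rule phi_Mc)
  ultimately show "in_ker_phibar A" unfolding in_ker_phibar_def by blast
qed

end
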